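(* Let $\mathcal{B}$ be a $\sigma$-algebra on a nonempty set $E$. A $\sigma$-maxitive measure on $\mathcal{B}$ is optimal if and only if it is exhaustive.
   Context: A maxitive measure on $\mathcal{B}$ is $\nu:\mathcal{B}\to[0,\infty]$ with $\nu(\emptyset)=0$ and $\nu(B\cup B')=\max(\nu(B),\nu(B'))$; it is $\sigma$-maxitive if moreover $\nu(\bigcup_nB_n)=\lim_n\nu(B_n)$ for every nondecreasing sequence $(B_n)$ in $\mathcal{B}$ (continuity from below). $\nu$ is continuous from above if $\nu(\bigcap_nB_n)=\lim_n\nu(B_n)$ for every nonincreasing sequence $B_1\supset B_2\supset\cdots$ in $\mathcal{B}$ (with no finiteness requirement). An optimal measure is a maxitive measure that is continuous from both above and below. $\nu$ is exhaustive if $\nu(B_n)\to0$ for every sequence $(B_n)$ of pairwise disjoint elements of $\mathcal{B}$. *)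

theory Defs
  imports "HOL-Analysis.Analysis"
begin

text \<open>Set functions \<nu> : 'a set \<Rightarrow> [0,\<infinity>] (values in ennreal), considered on a
  collection of sets \<B> (only their values on members of \<B> matter).\<close>

definition maxitive :: "'a set set \<Rightarrow> ('a set \<Rightarrow> ennreal) \<Rightarrow> bool" where
  "maxitive \<B> \<nu> \<longleftrightarrow> \<nu> {} = 0 \<and>
     (\<forall>B\<in>\<B>. \<forall>B'\<in>\<B>. \<nu> (B \<union> B') = max (\<nu> B) (\<nu> B'))"

definition continuous_from_below :: "'a set set \<Rightarrow> ('a set \<Rightarrow> ennreal) \<Rightarrow> bool" where
  "continuous_from_below \<B> \<nu> \<longleftrightarrow>
     (\<forall>B :: nat \<Rightarrow> 'a set. range B \<subseteq> \<B> \<and> incseq B \<longrightarrow>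
        (\<lambda>n. \<nu> (B n)) \<longlonglongrightarrow> \<nu> (\<Union>n. B n))"

definition continuous_from_above :: "'a set set \<Rightarrow> ('a set \<Rightarrow> ennreal) \<Rightarrow> bool" where
  "continuous_from_above \<B> \<nu> \<longleftrightarrow>
     (\<forall>B :: nat \<Rightarrow> 'a set. range B \<subseteq> \<B> \<and> decseq B \<longrightarrow>
        (\<lambda>n. \<nu> (B n)) \<longlonglongrightarrow> \<nu> (\<Inter>n. B n))"

definition sigma_maxitive :: "'a set set \<Rightarrow> ('a set \<Rightarrow> ennreal) \<Rightarrow> bool" where
  "sigma_maxitive \<B> \<nu> \<longleftrightarrow> maxitive \<B> \<nu> \<and> continuous_from_below \<B> \<nu>"

definition optimal :: "'a set set \<Rightarrow> ('a set \<Rightarrow> ennreal) \<Rightarrow> bool" where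
  "optimal \<B> \<nu> \<longleftrightarrow> maxitive \<B> \<nu> \<and> continuous_from_below \<B> \<nu> \<and> continuous_from_above \<B> \<nu>"

definition exhaustive :: "'a set set \<Rightarrow> ('a set \<Rightarrow> ennreal) \<Rightarrow> bool" where
  "exhaustive \<B> \<nu> \<longleftrightarrow>
     (\<forall>B :: nat \<Rightarrow> 'a set. range B \<subseteq> \<B> \<and> disjoint_family B \<longrightarrow>
        (\<lambda>n. \<nu> (B n)) \<longlonglongrightarrow> 0)"

end

theory Submission
  imports Defs
begin

lemma mono_nu:
  assumes S: "sigma_algebra E \<B>" and m: "maxitive \<B> \<nu>"
    and A: "A \<in> \<B>" and C: "C \<in> \<B>" and sub: "A \<subseteq> C"
  shows "\<nu> A \<le> \<nu> C"
proof -
  interpret sigma_algebra E \<B> by (rule S)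
  have "C - A \<in> \<B>" using A C by auto
  hence "\<nu> (A \<union> (C - A)) = max (\<nu> A) (\<nu> (C - A))" using m A unfolding maxitive_def by blast
  moreover have "A \<union> (C - A) = C" using sub by auto
  ultimately show ?thesis by simp
qed

lemma fin_bound:
  assumes S: "sigma_algebra E \<B>" and m: "maxitive \<B> \<nu>"
    and A: "\<And>k::nat. A k \<in> \<B>" and b: "\<And>k. k \<ge> N \<Longrightarrow> \<nu> (A k) \<le> b"
  shows "\<nu> (\<Union>k\<in>{N..<M}. A k) \<le> b"
proof (induction M)
  case 0
  then show ?case using m by (simp add: maxitive_def)
next
  case (Suc M)
  interpret sigma_algebra E \<B> by (rule S)
  show ?case
  proof (cases "M < N")
    case True
    then have "{N..<Suc M} = {}" by auto
    then show ?thesis using m by (simp add: maxitive_def)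
  next
    case False
    then have eq: "(\<Union>k\<in>{N..<Suc M}. A k) = A M \<union> (\<Union>k\<in>{N..<M}. A k)"
      by (auto simp: atLeastLessThanSuc)
    have "(\<Union>k\<in>{N..<M}. A k) \<in> \<B>" using A by auto
    then have "\<nu> (\<Union>k\<in>{N..<Suc M}. A k) = max (\<nu> (A M)) (\<nu> (\<Union>k\<in>{N..<M}. A k))"
      using m A unfolding eq maxitive_def by blast
    then show ?thesis using Suc b False by simp
  qed
qed

lemma dec_to_zero:
  assumes S: "sigma_algebra E \<B>" and m: "maxitive \<B> \<nu>" and cb: "continuous_from_below \<B> \<nu>"
    and D: "\<And>n. D n \<in> \<B>" and dec: "decseq D" and emp: "(\<Inter>n. D n) = {}"
    and lim: "(\<lambda>k. \<nu> (D k - D (Suc k))) \<longlonglongrightarrow> 0"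
  shows "(\<lambda>n. \<nu> (D n)) \<longlonglongrightarrow> 0"
proof (rule order_tendstoI)
  interpret sigma_algebra E \<B> by (rule S)
  fix a :: ennreal assume "a < 0" then show "\<forall>\<^sub>F n in sequentially. a < \<nu> (D n)" by simp
next
  interpret sigma_algebra E \<B> by (rule S)
  fix a :: ennreal assume a: "0 < a"
  obtain b where b: "0 < b" "b < a" using dense[OF a] by blast
  define A where "A k = D k - D (Suc k)" for k
  have AB: "A k \<in> \<B>" for k using D by (auto simp: A_def)
  from order_tendstoD(2)[OF lim b(1)] obtain N where N: "\<And>k. k \<ge> N \<Longrightarrow> \<nu> (A k) < b"
    unfolding A_def eventually_sequentially by blast
  have DN: "D N = (\<Union>M. (\<Union>k\<in>{N..<M}. A k))"
  proof
    show "(\<Union>M. (\<Union>k\<in>{N..<M}. A k)) \<subseteq> D N"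
    proof
      fix x assume "x \<in> (\<Union>M. (\<Union>k\<in>{N..<M}. A k))"
      then obtain k where k: "N \<le> k" "x \<in> D k" by (auto simp: A_def)
      have "D k \<subseteq> D N" using dec k(1) by (simp add: decseq_def)
      then show "x \<in> D N" using k by blast
    qed
    show "D N \<subseteq> (\<Union>M. (\<Union>k\<in>{N..<M}. A k))"
    proof
      fix x assume x: "x \<in> D N"
      have ex: "\<exists>m. x \<notin> D m" using emp by blast
      define m where "m = (LEAST m. x \<notin> D m)"
      have xm: "x \<notin> D m" unfolding m_def by (rule LeastI_ex[OF ex])
      have lt: "\<And>j. j < m \<Longrightarrow> x \<in> D j" unfolding m_def using not_less_Least by blast
      have "N < m"
      proof (rule ccontr)
        assume "\<not> N < m" then have "D N \<subseteq> D m" using dec by (simp add: decseq_def)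
        then show False using x xm by blast
      qed
      then obtain j where j: "m = Suc j" "N \<le> j" by (cases m) auto
      then have "x \<in> A j" using lt xm by (auto simp: A_def)
      then show "x \<in> (\<Union>M. (\<Union>k\<in>{N..<M}. A k))" using j by (auto intro!: exI[of _ "Suc j"])
    qed
  qed
  let ?C = "\<lambda>M. (\<Union>k\<in>{N..<M}. A k)"
  have CB: "range ?C \<subseteq> \<B>" using AB by auto
  have inc: "incseq ?C" unfolding incseq_def by (force simp: subset_iff)
  have "(\<lambda>M. \<nu> (?C M)) \<longlonglongrightarrow> \<nu> (\<Union>M. ?C M)"
    using cb CB inc unfolding continuous_from_below_def by blast
  moreover have "\<nu> (?C M) \<le> b" for M
    by (rule fin_bound[OF S m AB]) (use N in \<open>auto intro: less_imp_le\<close>)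
  ultimately have "\<nu> (D N) \<le> b" unfolding DN by (intro LIMSEQ_le_const2) auto
  moreover have "n \<ge> N \<Longrightarrow> \<nu> (D n) \<le> \<nu> (D N)" for n
    using mono_nu[OF S m D D] dec by (auto simp: decseq_def)
  ultimately show "\<forall>\<^sub>F n in sequentially. \<nu> (D n) < a"
    unfolding eventually_sequentially using b(2) by (meson order.trans le_less_trans)
qed

theorem proposition6p4:
  fixes E :: "'a set" and \<B> :: "'a set set" and \<nu> :: "'a set \<Rightarrow> ennreal"
  assumes "sigma_algebra E \<B>" and "E \<noteq> {}"
    and "sigma_maxitive \<B> \<nu>"
  shows "optimal \<B> \<nu> \<longleftrightarrow> exhaustive \<B> \<nu>"
proof -
  interpret sigma_algebra E \<B> by (rule assms(1))
  have m: "maxitive \<B> \<nu>" and cb: "continuous_from_below \<B> \<nu>"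
    using assms(3) by (auto simp: sigma_maxitive_def)
  show ?thesis
  proof
    assume "optimal \<B> \<nu>"
    then have ca: "continuous_from_above \<B> \<nu>" by (simp add: optimal_def)
    show "exhaustive \<B> \<nu>"
      unfolding exhaustive_def
    proof (intro allI impI)
      fix B :: "nat \<Rightarrow> 'a set" assume h: "range B \<subseteq> \<B> \<and> disjoint_family B"
      define C where "C n = (\<Union>k\<in>{n..}. B k)" for n
      have CB: "C n \<in> \<B>" for n using h by (auto simp: C_def)
      have dec: "decseq C" unfolding decseq_def C_def by (force simp: subset_iff)
      have emp: "(\<Inter>n. C n) = {}"
      proof (rule ccontr)
        assume "(\<Inter>n. C n) \<noteq> {}"
        then obtain x where x: "\<And>n. x \<in> C n" by blast
        from x[of 0] obtain k where k: "x \<in> B k" by (auto simp: C_def)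
        from x[of "Suc k"] obtain j where j: "j \<ge> Suc k" "x \<in> B j" by (auto simp: C_def)
        have "B k \<inter> B j = {}" using h j(1) by (auto simp: disjoint_family_on_def)
        then show False using k j by blast
      qed
      have "(\<lambda>n. \<nu> (C n)) \<longlonglongrightarrow> \<nu> {}"
        using ca CB dec emp unfolding continuous_from_above_def by (metis image_subsetI)
      then have lim: "(\<lambda>n. \<nu> (C n)) \<longlonglongrightarrow> 0" using m by (simp add: maxitive_def)
      have le: "\<nu> (B n) \<le> \<nu> (C n)" for n
      proof -
        have "B n \<in> \<B>" using h by auto
        moreover have "B n \<subseteq> C n" by (auto simp: C_def)
        ultimately show ?thesis using mono_nu[OF assms(1) m _ CB] by blast
      qed
      show "(\<lambda>n. \<nu> (B n)) \<longlonglongrightarrow> 0"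
        by (rule tendsto_sandwich[OF _ _ tendsto_const lim]) (use le in auto)
    qed
  next
    assume ex: "exhaustive \<B> \<nu>"
    have "continuous_from_above \<B> \<nu>"
      unfolding continuous_from_above_def
    proof (intro allI impI)
      fix B :: "nat \<Rightarrow> 'a set" assume h: "range B \<subseteq> \<B> \<and> decseq B"
      define I where "I = (\<Inter>n. B n)"
      have IB: "I \<in> \<B>" using h by (auto simp: I_def)
      define D where "D n = B n - I" for n
      have DB: "D n \<in> \<B>" for n using h IB by (auto simp: D_def)
      have dec: "decseq D" using h by (auto simp: decseq_def D_def)
      have emp: "(\<Inter>n. D n) = {}" by (auto simp: D_def I_def)
      have disj: "disjoint_family (\<lambda>k. D k - D (Suc k))"
        unfolding disjoint_family_on_def
      proof (intro ballI impI)
        fix i j :: nat assume "i \<noteq> j"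
        then consider "i < j" | "j < i" by linarith
        then show "(D i - D (Suc i)) \<inter> (D j - D (Suc j)) = {}"
        proof cases
          case 1 then have "D j \<subseteq> D (Suc i)" using dec by (simp add: decseq_def)
          then show ?thesis by blast
        next
          case 2 then have "D i \<subseteq> D (Suc j)" using dec by (simp add: decseq_def)
          then show ?thesis by blast
        qed
      qed
      have "range (\<lambda>k. D k - D (Suc k)) \<subseteq> \<B>" using DB by auto
      then have "(\<lambda>k. \<nu> (D k - D (Suc k))) \<longlonglongrightarrow> 0"
        using ex disj unfolding exhaustive_def by blast
      then have D0: "(\<lambda>n. \<nu> (D n)) \<longlonglongrightarrow> 0"
        by (rule dec_to_zero[OF assms(1) m cb DB dec emp])
      have eq: "\<nu> (B n) = max (\<nu> I) (\<nu> (D n))" for n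
      proof -
        have "B n = I \<union> D n" by (auto simp: D_def I_def)
        then show ?thesis using m IB DB unfolding maxitive_def by metis
      qed
      have "(\<lambda>n. max (\<nu> I) (\<nu> (D n))) \<longlonglongrightarrow> max (\<nu> I) 0"
        by (intro tendsto_max tendsto_const D0)
      then show "(\<lambda>n. \<nu> (B n)) \<longlonglongrightarrow> \<nu> (\<Inter>n. B n)"
        unfolding eq I_def by simp
    qed
    then show "optimal \<B> \<nu>" using m cb by (simp add: optimal_def)
  qed
qed

end
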